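(* Let $c \ge 1$ be an integer, let $m = 5c$, and let $f(x) = x^{5c} + x^{3c} + x^{2c} + x^{c} + 1 \in \mathbb{F}_2[x]$. There is a fixed, input-independent straight-line program using no AND operations and exactly $12c - 1 = \frac{12}{5}m - 1$ two-input XOR operations which, on input the coefficient bits $d_0,\dots,d_{2m-2}$ of an arbitrary polynomial $D(x)=\sum_{i=0}^{2m-2} d_i x^i \in \mathbb{F}_2[x]$ of degree at most $2m-2$, outputs the $m$ coefficient bits of the remainder of $D$ upon division by $f$.
   Context: A straight-line program over $\mathbb{F}_2$ here is a sequence of gates, each computing the XOR (sum in $\mathbb{F}_2$) of two values that are either input bits or outputs of earlier gates; each output bit is an input bit or a gate output. The number of XOR operations is the number of gates. *)

theory Defs
  imports "HOL-Library.Z2" "HOL-Computational_Algebra.Polynomial"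
begin

text \<open>XOR straight-line programs over GF(2) (type bit).
  Wires 0..n-1 are the input bits; wire n+j is the output of gate j.
  A gate (a,b) computes the XOR (sum in GF(2)) of wires a and b.\<close>

type_synonym gate = "nat \<times> nat"

definition wire_val :: "nat \<Rightarrow> (nat \<Rightarrow> bit) \<Rightarrow> bit list \<Rightarrow> nat \<Rightarrow> bit" where
  "wire_val n x vs w = (if w < n then x w else vs ! (w - n))"

definition gate_vals :: "nat \<Rightarrow> (nat \<Rightarrow> bit) \<Rightarrow> gate list \<Rightarrow> bit list" where
  "gate_vals n x gs =
     fold (\<lambda>(a, b) vs. vs @ [wire_val n x vs a + wire_val n x vs b]) gs []"

definition valid_slp :: "nat \<Rightarrow> gate list \<Rightarrow> nat list \<Rightarrow> bool" where
  "valid_slp n gs outs \<longleftrightarrow>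
     (\<forall>j < length gs. fst (gs ! j) < n + j \<and> snd (gs ! j) < n + j) \<and>
     (\<forall>w \<in> set outs. w < n + length gs)"

definition slp_outputs :: "nat \<Rightarrow> gate list \<Rightarrow> nat list \<Rightarrow> (nat \<Rightarrow> bit) \<Rightarrow> bit list" where
  "slp_outputs n gs outs x = map (wire_val n x (gate_vals n x gs)) outs"

end

theory Submission
  imports Defs
begin

lemma coeff_blk: "coeff (\<Sum>p<c. monom (g p) p) n = (if n < c then g n else (0::'a::comm_monoid_add))"
  by (simp add: coeff_sum coeff_monom)

lemma two_poly_bit: "(2::bit poly) = 0"
  by (simp add: numeral_poly)

lemma blocks:
  fixes dd :: "nat \<Rightarrow> bit"
  shows "(\<Sum>k<N*c. monom (dd k) k) = (\<Sum>j<N. (\<Sum>p<c. monom (dd (j*c+p)) p) * monom 1 c ^ j)"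
proof -
  have "(\<Sum>k<N*c. monom (dd k) k) = (\<Sum>j<N. \<Sum>k\<in>{j*c..<j*c+c}. monom (dd k) k)"
    by (simp add: sum.nat_group)
  also have "\<dots> = (\<Sum>j<N. (\<Sum>p<c. monom (dd (j*c+p)) p) * monom 1 c ^ j)"
  proof (rule sum.cong[OF refl])
    fix j
    have "(\<Sum>k\<in>{j*c..<j*c+c}. monom (dd k) k) = (\<Sum>p<c. monom (dd (j*c+p)) (j*c+p))"
      using sum.shift_bounds_nat_ivl[of "\<lambda>k. monom (dd k) k" 0 "j*c" c]
      by (simp add: lessThan_atLeast0 add.commute)
    also have "\<dots> = (\<Sum>p<c. monom (dd (j*c+p)) p * monom 1 c ^ j)"
      by (simp add: monom_power mult_monom mult.commute add.commute del: mult_bit_eq_and add_bit_eq_xor)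
    finally show "(\<Sum>k\<in>{j*c..<j*c+c}. monom (dd k) k) = (\<Sum>p<c. monom (dd (j*c+p)) p) * monom 1 c ^ j"
      by (simp add: sum_distrib_right)
  qed
  finally show ?thesis .
qed

lemma coeff5:
  fixes Q0 Q1 Q2 Q3 Q4 :: "'a::comm_ring_1 poly"
  assumes Q: "\<And>n. n \<ge> c \<Longrightarrow> coeff Q0 n = 0" "\<And>n. n \<ge> c \<Longrightarrow> coeff Q1 n = 0"
    "\<And>n. n \<ge> c \<Longrightarrow> coeff Q2 n = 0" "\<And>n. n \<ge> c \<Longrightarrow> coeff Q3 n = 0"
    "\<And>n. n \<ge> c \<Longrightarrow> coeff Q4 n = 0"
  shows "coeff (Q0 + Q1 * monom 1 c + Q2 * monom 1 c ^ 2 + Q3 * monom 1 c ^ 3 + Q4 * monom 1 c ^ 4) n =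
    (if n < c then coeff Q0 n else if n < 2*c then coeff Q1 (n - c)
     else if n < 3*c then coeff Q2 (n - 2*c) else if n < 4*c then coeff Q3 (n - 3*c)
     else if n < 5*c then coeff Q4 (n - 4*c) else 0)"
proof -
  have m: "coeff (P * monom 1 k) n = (if n < k then 0 else coeff P (n - k))" for P :: "'a poly" and k
    by (simp add: mult.commute[of P] coeff_monom_mult)
  show ?thesis
    by (simp add: monom_power m Q mult.commute[of c])
qed

lemma id2:
  fixes y b0 b1 b2 b3 b4 b5 b6 b7 b8 b9 :: "'a::comm_ring_1"
  assumes "2 = (0::'a)"
  shows "b0 + b1 * y + b2 * y^2 + b3 * y^3 + b4 * y^4 + b5 * y^5 + b6 * y^6
     + b7 * y^7 + b8 * y^8 + b9 * y^9 = (b0 + b5 + b7 + b8) + (b1 + b5 + b6 + b7 + b9) * y + (b2 + b5 + b6) * y^2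
     + (b3 + b5 + b6 + b8) * y^3 + (b4 + b6 + b7 + b9) * y^4 + (y^5 + y^3 + y^2 + y + 1) * (b5 + b6 * y + b7 * (y^2 + 1) + b8 * (y^3 + y + 1) + b9 * (y^4 + y^2 + y))"
proof -
  have "(b0 + b5 + b7 + b8) + (b1 + b5 + b6 + b7 + b9) * y + (b2 + b5 + b6) * y^2
     + (b3 + b5 + b6 + b8) * y^3 + (b4 + b6 + b7 + b9) * y^4 + (y^5 + y^3 + y^2 + y + 1) * (b5 + b6 * y + b7 * (y^2 + 1) + b8 * (y^3 + y + 1) + b9 * (y^4 + y^2 + y))
    = b0 + b1 * y + b2 * y^2 + b3 * y^3 + b4 * y^4 + b5 * y^5 + b6 * y^6
     + b7 * y^7 + b8 * y^8 + b9 * y^9 + 2 * (b5*(1+y+y^2+y^3) + b6*(y+y^2+y^3+y^4) + b7*(1+y+y^2+y^3+y^4+y^5)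
       + b8*(1+y+y^2+2*y^3+y^4+y^5+y^6) + b9*(y+y^2+y^3+2*y^4+y^5+y^6+y^7))"
    by (simp add: algebra_simps eval_nat_numeral)
  then show ?thesis using assms by simp
qed

lemma reduce:
  fixes dd :: "nat \<Rightarrow> bit" and c :: nat
  assumes c: "c \<ge> 1"
  defines "y \<equiv> monom (1::bit) c"
  defines "B \<equiv> \<lambda>j. \<Sum>p<c. monom (dd (j*c+p)) p"
  defines "R \<equiv> (B 0 + B 5 + B 7 + B 8) + (B 1 + B 5 + B 6 + B 7 + B 9) * y + (B 2 + B 5 + B 6) * y^2
     + (B 3 + B 5 + B 6 + B 8) * y^3 + (B 4 + B 6 + B 7 + B 9) * y^4"
  shows "(\<Sum>k<10*c. monom (dd k) k) mod (monom 1 (5*c) + monom 1 (3*c) + monom 1 (2*c) + monom 1 c + 1) = R"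
proof -
  let ?f = "monom 1 (5*c) + monom 1 (3*c) + monom 1 (2*c) + monom 1 c + (1::bit poly)"
  have f: "?f = y^5 + y^3 + y^2 + y + 1"
    by (simp add: y_def monom_power mult.commute[of c])
  have D: "(\<Sum>k<10*c. monom (dd k) k) = (\<Sum>j<10. B j * y ^ j)"
    unfolding B_def y_def by (rule blocks)
  also have "\<dots> = B 0 + B 1 * y + B 2 * y^2 + B 3 * y^3 + B 4 * y^4 + B 5 * y^5 + B 6 * y^6
     + B 7 * y^7 + B 8 * y^8 + B 9 * y^9"
    by (simp add: eval_nat_numeral)
  also have "\<dots> = R + ?f * (B 5 + B 6 * y + B 7 * (y^2 + 1) + B 8 * (y^3 + y + 1) + B 9 * (y^4 + y^2 + y))"
    unfolding f R_def by (rule id2[OF two_poly_bit])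
  finally have D2: "(\<Sum>k<10*c. monom (dd k) k) = R + ?f * (B 5 + B 6 * y + B 7 * (y^2 + 1) + B 8 * (y^3 + y + 1) + B 9 * (y^4 + y^2 + y))" .
  have Bc: "coeff (B j) n = 0" if "n \<ge> c" for j n
    using that unfolding B_def by (simp add: coeff_blk)
  have cR: "coeff R n = 0" if "n \<ge> 5*c" for n
  proof -
    have "coeff R n = (if n < c then coeff (B 0 + B 5 + B 7 + B 8) n else if n < 2*c then coeff (B 1 + B 5 + B 6 + B 7 + B 9) (n - c)
     else if n < 3*c then coeff (B 2 + B 5 + B 6) (n - 2*c) else if n < 4*c then coeff (B 3 + B 5 + B 6 + B 8) (n - 3*c)
     else if n < 5*c then coeff (B 4 + B 6 + B 7 + B 9) (n - 4*c) else 0)"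
      unfolding R_def y_def by (rule coeff5) (simp_all add: Bc del: add_bit_eq_xor)
    also have "\<dots> = 0" using that by simp
    finally show ?thesis .
  qed
  have degf: "degree ?f = 5*c"
  proof (rule antisym)
    show "degree ?f \<le> 5*c"
      by (rule degree_le) (auto simp: coeff_monom)
    show "5*c \<le> degree ?f"
      by (rule le_degree) (use c in \<open>simp add: coeff_monom\<close>)
  qed
  have degR: "degree R < 5*c"
  proof -
    have "degree R \<le> 5*c - 1"
      by (rule degree_le) (use c cR in auto)
    then show ?thesis using c by linarith
  qed
  have "(\<Sum>k<10*c. monom (dd k) k) mod ?f = R mod ?f"
    unfolding D2 by simp
  also have "\<dots> = R" using degR degf by (simp add: mod_poly_less)
  finally show ?thesis .
qed

lemma gate_vals_snoc: "gate_vals n x (gs @ [(a,b)]) =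
   gate_vals n x gs @ [wire_val n x (gate_vals n x gs) a + wire_val n x (gate_vals n x gs) b]"
  by (simp add: gate_vals_def)

lemma length_gate_vals: "length (gate_vals n x gs) = length gs"
proof (induction gs rule: rev_induct)
  case Nil then show ?case by (simp add: gate_vals_def)
next
  case (snoc g gs) then show ?case by (cases g) (simp add: gate_vals_snoc)
qed

lemma wire_val_append: "w < n + length vs \<Longrightarrow> wire_val n x (vs @ ys) w = wire_val n x vs w"
  by (auto simp: wire_val_def nth_append)

lemma gate_vals_nth:
  assumes "\<forall>j<length gs. fst (gs ! j) < n + j \<and> snd (gs ! j) < n + j" "j < length gs"
  shows "wire_val n x (gate_vals n x gs) (n + j) =
    wire_val n x (gate_vals n x gs) (fst (gs ! j)) + wire_val n x (gate_vals n x gs) (snd (gs ! j))"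
  using assms
proof (induction gs arbitrary: j rule: rev_induct)
  case Nil then show ?case by simp
next
  case (snoc g gs)
  obtain a b where g: "g = (a, b)" by (cases g)
  have v: "\<forall>j<length gs. fst (gs ! j) < n + j \<and> snd (gs ! j) < n + j"
  proof (intro allI impI)
    fix j assume "j < length gs"
    then show "fst (gs ! j) < n + j \<and> snd (gs ! j) < n + j"
      using spec[OF snoc.prems(1), of j] by (simp add: nth_append)
  qed
  have lg: "length (gate_vals n x gs) = length gs" by (rule length_gate_vals)
  show ?case
  proof (cases "j < length gs")
    case True
    have ab: "fst (gs ! j) < n + length gs" "snd (gs ! j) < n + length gs" using v True by auto
    have "wire_val n x (gate_vals n x (gs @ [g])) (n + j) = wire_val n x (gate_vals n x gs) (n + j)"
      unfolding g gate_vals_snoc by (rule wire_val_append) (simp add: lg True)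
    also have "\<dots> = wire_val n x (gate_vals n x gs) (fst (gs ! j)) + wire_val n x (gate_vals n x gs) (snd (gs ! j))"
      using snoc.IH[OF v True] .
    also have "\<dots> = wire_val n x (gate_vals n x (gs @ [g])) (fst ((gs @ [g]) ! j)) + wire_val n x (gate_vals n x (gs @ [g])) (snd ((gs @ [g]) ! j))"
      unfolding g gate_vals_snoc using ab True by (simp add: wire_val_append lg nth_append)
    finally show ?thesis .
  next
    case False
    then have j: "j = length gs" using snoc.prems(2) by simp
    have ab: "a < n + length gs" "b < n + length gs" using snoc.prems(1) j g by (auto dest: spec[of _ j])
    show ?thesis unfolding g gate_vals_snoc j
      using ab by (simp add: wire_val_append lg del: add_bit_eq_xor) (simp add: wire_val_def lg nth_append del: add_bit_eq_xor)
  qed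
qed

lemma concat_nth12:
  assumes "\<And>p. length (blk p) = 12" "p < N" "k < 12"
  shows "concat (map blk [0..<N]) ! (12 * p + k) = blk p ! k"
  using assms(2)
proof (induction N)
  case 0 then show ?case by simp
next
  case (Suc N)
  have l: "length (concat (map blk [0..<N])) = 12 * N"
    by (induction N) (simp_all add: assms(1))
  show ?case
  proof (cases "p < N")
    case True then show ?thesis using Suc assms(3) l by (simp add: nth_append)
  next
    case False then have "p = N" using Suc by simp
    then show ?thesis using l assms(3) by (simp add: nth_append)
  qed
qed

definition blk :: "nat \<Rightarrow> nat \<Rightarrow> nat \<Rightarrow> gate list" where
 "blk c n p = [(5*c+p, 6*c+p), (2*c+p, n+12*p), (3*c+p, n+12*p), (n+12*p+2, 8*c+p), (7*c+p, 9*c+p),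
   (c+p, n+12*p), (n+12*p+5, n+12*p+4), (4*c+p, 6*c+p), (n+12*p+7, n+12*p+4), (p, 5*c+p),
   (n+12*p+9, 7*c+p), (n+12*p+10, 8*c+p)]"

definition lblk :: "nat \<Rightarrow> nat \<Rightarrow> nat \<Rightarrow> gate list" where
 "lblk c n p = [(5*c+p, 6*c+p), (2*c+p, n+12*p), (3*c+p, n+12*p), (n+12*p+2, 8*c+p),
   (c+p, n+12*p), (n+12*p+4, 7*c+p), (4*c+p, 6*c+p), (n+12*p+6, 7*c+p), (p, 5*c+p),
   (n+12*p+8, 7*c+p), (n+12*p+9, 8*c+p)]"

definition prog :: "nat \<Rightarrow> gate list" where
 "prog c = concat (map (blk c (10*c-1)) [0..<c-1]) @ lblk c (10*c-1) (c-1)"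

lemma len_concat: "length (concat (map (blk c n) [0..<N])) = 12 * N"
  by (induction N) (simp_all add: blk_def)

lemma length_prog: "c \<ge> 1 \<Longrightarrow> length (prog c) = 12 * c - 1"
  by (simp add: prog_def len_concat lblk_def)

lemma prog_nth1: "p < c - 1 \<Longrightarrow> k < 12 \<Longrightarrow> prog c ! (12*p+k) = blk c (10*c-1) p ! k"
  unfolding prog_def
  by (simp add: nth_append len_concat concat_nth12 blk_def)

lemma prog_nth2: "k < 11 \<Longrightarrow> prog c ! (12*(c-1)+k) = lblk c (10*c-1) (c-1) ! k"
  unfolding prog_def
  by (simp add: nth_append len_concat)

lemma prog_valid:
  assumes c: "c \<ge> 1"
  shows "\<forall>j<length (prog c). fst (prog c ! j) < (10*c-1) + j \<and> snd (prog c ! j) < (10*c-1) + j"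
proof (intro allI impI)
  fix j assume j: "j < length (prog c)"
  show "fst (prog c ! j) < (10*c-1) + j \<and> snd (prog c ! j) < (10*c-1) + j"
  proof (cases "j < 12*(c-1)")
    case True
    define p where "p = j div 12"
    define k where "k = j mod 12"
    have jpk: "j = 12*p+k" unfolding p_def k_def by simp
    have p: "p < c - 1" using True unfolding p_def by simp
    have k: "k < 12" unfolding k_def by simp
    have "k \<in> {0,1,2,3,4,5,6,7,8,9,10,11}" using k by (simp only: insert_iff empty_iff) presburger
    then show ?thesis unfolding jpk prog_nth1[OF p k] using p c
      by (auto simp: blk_def)
  next
    case False
    define k where "k = j - 12*(c-1)"
    have jk: "j = 12*(c-1)+k" using False unfolding k_def by simp
    have k: "k < 11" using j c False length_prog[OF c] unfolding k_def by simp
    have "k \<in> {0,1,2,3,4,5,6,7,8,9,10}" using k by (simp only: insert_iff empty_iff) presburger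
    then show ?thesis unfolding jk prog_nth2[OF k] using c
      by (auto simp: lblk_def)
  qed
qed

lemma prog_gate:
  assumes c: "c \<ge> 1" and n: "n = 10*c-1" and j: "j < 12*c-1"
  shows "wire_val n d (gate_vals n d (prog c)) (n + j) =
    wire_val n d (gate_vals n d (prog c)) (fst (prog c ! j)) + wire_val n d (gate_vals n d (prog c)) (snd (prog c ! j))"
  unfolding n by (rule gate_vals_nth) (use prog_valid[OF c] length_prog[OF c] j in auto)

lemma prog_in:
  assumes "w < n"
  shows "wire_val n d (gate_vals n d gs) w = d w"
  using assms by (simp add: wire_val_def)

lemma sem1:
  fixes d :: "nat \<Rightarrow> bit"
  assumes c: "c \<ge> 1" and n: "n = 10*c-1" and p: "p < c - 1"
  defines "V \<equiv> wire_val n d (gate_vals n d (prog c))"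
  shows "V (n+12*p+11) = d p + d(5*c+p) + d(7*c+p) + d(8*c+p)"
    "V (n+12*p+6) = d (c+p) + (d(5*c+p) + d(6*c+p)) + (d(7*c+p) + d(9*c+p))"
    "V (n+12*p+1) = d (2*c+p) + (d(5*c+p) + d(6*c+p))"
    "V (n+12*p+3) = d (3*c+p) + (d(5*c+p) + d(6*c+p)) + d(8*c+p)"
    "V (n+12*p+8) = d (4*c+p) + d(6*c+p) + (d(7*c+p) + d(9*c+p))"
proof -
  have G: "V (n+12*p+k) = V (fst (blk c n p ! k)) + V (snd (blk c n p ! k))" if "k < 12" for k
  proof -
    have "12*p+k < 12*c-1" using p that by linarith
    from prog_gate[OF c n this, of d] prog_nth1[OF p that] show ?thesis
      unfolding V_def n by (simp add: add.assoc del: add_bit_eq_xor)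
  qed
  have I: "V w = d w" if "w < n" for w unfolding V_def using that by (rule prog_in)
  have lt: "p < n" "c+p < n" "2*c+p < n" "3*c+p < n" "4*c+p < n" "5*c+p < n" "6*c+p < n" "7*c+p < n"
    "8*c+p < n" "9*c+p < n" using p n by linarith+
  have b0: "blk c n p ! 0 = (5*c+p, 6*c+p)" by (simp add: blk_def)
  have g0: "V (n+12*p) = d(5*c+p) + d(6*c+p)" using G[of 0] b0 by (simp only: add_0_right fst_conv snd_conv I lt )
  have b1: "blk c n p ! 1 = (2*c+p, n+12*p)" by (simp add: blk_def)
  have g1: "V (n+12*p+1) = d (2*c+p) + (d(5*c+p) + d(6*c+p))" using G[of 1] b1 by (simp only: add_0_right fst_conv snd_conv I lt g0)
  have b2: "blk c n p ! 2 = (3*c+p, n+12*p)" by (simp add: blk_def)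
  have g2: "V (n+12*p+2) = d (3*c+p) + (d(5*c+p) + d(6*c+p))" using G[of 2] b2 by (simp only: add_0_right fst_conv snd_conv I lt g0 g1)
  have b3: "blk c n p ! 3 = (n+12*p+2, 8*c+p)" by (simp add: blk_def)
  have g3: "V (n+12*p+3) = d (3*c+p) + (d(5*c+p) + d(6*c+p)) + d(8*c+p)" using G[of 3] b3 by (simp only: add_0_right fst_conv snd_conv I lt g0 g1 g2)
  have b4: "blk c n p ! 4 = (7*c+p, 9*c+p)" by (simp add: blk_def)
  have g4: "V (n+12*p+4) = d(7*c+p) + d(9*c+p)" using G[of 4] b4 by (simp only: add_0_right fst_conv snd_conv I lt g0 g1 g2 g3)
  have b5: "blk c n p ! 5 = (c+p, n+12*p)" by (simp add: blk_def)
  have g5: "V (n+12*p+5) = d (c+p) + (d(5*c+p) + d(6*c+p))" using G[of 5] b5 by (simp only: add_0_right fst_conv snd_conv I lt g0 g1 g2 g3 g4)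
  have b6: "blk c n p ! 6 = (n+12*p+5, n+12*p+4)" by (simp add: blk_def)
  have g6: "V (n+12*p+6) = d (c+p) + (d(5*c+p) + d(6*c+p)) + (d(7*c+p) + d(9*c+p))" using G[of 6] b6 by (simp only: add_0_right fst_conv snd_conv I lt g0 g1 g2 g3 g4 g5)
  have b7: "blk c n p ! 7 = (4*c+p, 6*c+p)" by (simp add: blk_def)
  have g7: "V (n+12*p+7) = d (4*c+p) + d(6*c+p)" using G[of 7] b7 by (simp only: add_0_right fst_conv snd_conv I lt g0 g1 g2 g3 g4 g5 g6)
  have b8: "blk c n p ! 8 = (n+12*p+7, n+12*p+4)" by (simp add: blk_def)
  have g8: "V (n+12*p+8) = d (4*c+p) + d(6*c+p) + (d(7*c+p) + d(9*c+p))" using G[of 8] b8 by (simp only: add_0_right fst_conv snd_conv I lt g0 g1 g2 g3 g4 g5 g6 g7)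
  have b9: "blk c n p ! 9 = (p, 5*c+p)" by (simp add: blk_def)
  have g9: "V (n+12*p+9) = d p + d(5*c+p)" using G[of 9] b9 by (simp only: add_0_right fst_conv snd_conv I lt g0 g1 g2 g3 g4 g5 g6 g7 g8)
  have b10: "blk c n p ! 10 = (n+12*p+9, 7*c+p)" by (simp add: blk_def)
  have g10: "V (n+12*p+10) = d p + d(5*c+p) + d(7*c+p)" using G[of 10] b10 by (simp only: add_0_right fst_conv snd_conv I lt g0 g1 g2 g3 g4 g5 g6 g7 g8 g9)
  have b11: "blk c n p ! 11 = (n+12*p+10, 8*c+p)" by (simp add: blk_def)
  have g11: "V (n+12*p+11) = d p + d(5*c+p) + d(7*c+p) + d(8*c+p)" using G[of 11] b11 by (simp only: add_0_right fst_conv snd_conv I lt g0 g1 g2 g3 g4 g5 g6 g7 g8 g9 g10)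
  show "V (n+12*p+11) = d p + d(5*c+p) + d(7*c+p) + d(8*c+p)"
    "V (n+12*p+6) = d (c+p) + (d(5*c+p) + d(6*c+p)) + (d(7*c+p) + d(9*c+p))"
    "V (n+12*p+1) = d (2*c+p) + (d(5*c+p) + d(6*c+p))"
    "V (n+12*p+3) = d (3*c+p) + (d(5*c+p) + d(6*c+p)) + d(8*c+p)"
    "V (n+12*p+8) = d (4*c+p) + d(6*c+p) + (d(7*c+p) + d(9*c+p))"
    using g11 g6 g1 g3 g8 by simp_all
qed


lemma sem2:
  fixes d :: "nat \<Rightarrow> bit"
  assumes c: "c \<ge> 1" and n: "n = 10*c-1" and p: "p = c - 1"
  defines "V \<equiv> wire_val n d (gate_vals n d (prog c))"
  shows "V (n+12*p+10) = d p + d(5*c+p) + d(7*c+p) + d(8*c+p)"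
    "V (n+12*p+5) = d (c+p) + (d(5*c+p) + d(6*c+p)) + d(7*c+p)"
    "V (n+12*p+1) = d (2*c+p) + (d(5*c+p) + d(6*c+p))"
    "V (n+12*p+3) = d (3*c+p) + (d(5*c+p) + d(6*c+p)) + d(8*c+p)"
    "V (n+12*p+7) = d (4*c+p) + d(6*c+p) + d(7*c+p)"
proof -
  have G: "V (n+12*p+k) = V (fst (lblk c n p ! k)) + V (snd (lblk c n p ! k))" if "k < 11" for k
  proof -
    have "12*(c-1)+k < 12*c-1" using c that by linarith
    from prog_gate[OF c n this, of d] prog_nth2[OF that, of c] show ?thesis
      unfolding V_def n p by (simp add: add.assoc del: add_bit_eq_xor)
  qed
  have I: "V w = d w" if "w < n" for w unfolding V_def using that by (rule prog_in)
  have lt: "p < n" "c+p < n" "2*c+p < n" "3*c+p < n" "4*c+p < n" "5*c+p < n" "6*c+p < n" "7*c+p < n"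
    "8*c+p < n" using p n c by linarith+
  have b0: "lblk c n p ! 0 = (5*c+p, 6*c+p)" by (simp add: lblk_def)
  have g0: "V (n+12*p) = d(5*c+p) + d(6*c+p)" using G[of 0] b0 by (simp only: add_0_right fst_conv snd_conv I lt )
  have b1: "lblk c n p ! 1 = (2*c+p, n+12*p)" by (simp add: lblk_def)
  have g1: "V (n+12*p+1) = d (2*c+p) + (d(5*c+p) + d(6*c+p))" using G[of 1] b1 by (simp only: add_0_right fst_conv snd_conv I lt g0)
  have b2: "lblk c n p ! 2 = (3*c+p, n+12*p)" by (simp add: lblk_def)
  have g2: "V (n+12*p+2) = d (3*c+p) + (d(5*c+p) + d(6*c+p))" using G[of 2] b2 by (simp only: add_0_right fst_conv snd_conv I lt g0 g1)
  have b3: "lblk c n p ! 3 = (n+12*p+2, 8*c+p)" by (simp add: lblk_def)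
  have g3: "V (n+12*p+3) = d (3*c+p) + (d(5*c+p) + d(6*c+p)) + d(8*c+p)" using G[of 3] b3 by (simp only: add_0_right fst_conv snd_conv I lt g0 g1 g2)
  have b4: "lblk c n p ! 4 = (c+p, n+12*p)" by (simp add: lblk_def)
  have g4: "V (n+12*p+4) = d (c+p) + (d(5*c+p) + d(6*c+p))" using G[of 4] b4 by (simp only: add_0_right fst_conv snd_conv I lt g0 g1 g2 g3)
  have b5: "lblk c n p ! 5 = (n+12*p+4, 7*c+p)" by (simp add: lblk_def)
  have g5: "V (n+12*p+5) = d (c+p) + (d(5*c+p) + d(6*c+p)) + d(7*c+p)" using G[of 5] b5 by (simp only: add_0_right fst_conv snd_conv I lt g0 g1 g2 g3 g4)
  have b6: "lblk c n p ! 6 = (4*c+p, 6*c+p)" by (simp add: lblk_def)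
  have g6: "V (n+12*p+6) = d (4*c+p) + d(6*c+p)" using G[of 6] b6 by (simp only: add_0_right fst_conv snd_conv I lt g0 g1 g2 g3 g4 g5)
  have b7: "lblk c n p ! 7 = (n+12*p+6, 7*c+p)" by (simp add: lblk_def)
  have g7: "V (n+12*p+7) = d (4*c+p) + d(6*c+p) + d(7*c+p)" using G[of 7] b7 by (simp only: add_0_right fst_conv snd_conv I lt g0 g1 g2 g3 g4 g5 g6)
  have b8: "lblk c n p ! 8 = (p, 5*c+p)" by (simp add: lblk_def)
  have g8: "V (n+12*p+8) = d p + d(5*c+p)" using G[of 8] b8 by (simp only: add_0_right fst_conv snd_conv I lt g0 g1 g2 g3 g4 g5 g6 g7)
  have b9: "lblk c n p ! 9 = (n+12*p+8, 7*c+p)" by (simp add: lblk_def)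
  have g9: "V (n+12*p+9) = d p + d(5*c+p) + d(7*c+p)" using G[of 9] b9 by (simp only: add_0_right fst_conv snd_conv I lt g0 g1 g2 g3 g4 g5 g6 g7 g8)
  have b10: "lblk c n p ! 10 = (n+12*p+9, 8*c+p)" by (simp add: lblk_def)
  have g10: "V (n+12*p+10) = d p + d(5*c+p) + d(7*c+p) + d(8*c+p)" using G[of 10] b10 by (simp only: add_0_right fst_conv snd_conv I lt g0 g1 g2 g3 g4 g5 g6 g7 g8 g9)
  show "V (n+12*p+10) = d p + d(5*c+p) + d(7*c+p) + d(8*c+p)"
    "V (n+12*p+5) = d (c+p) + (d(5*c+p) + d(6*c+p)) + d(7*c+p)"
    "V (n+12*p+1) = d (2*c+p) + (d(5*c+p) + d(6*c+p))"
    "V (n+12*p+3) = d (3*c+p) + (d(5*c+p) + d(6*c+p)) + d(8*c+p)"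
    "V (n+12*p+7) = d (4*c+p) + d(6*c+p) + d(7*c+p)"
    using g10 g5 g1 g3 g7 by simp_all
qed
lemma coeffR:
  fixes dd :: "nat \<Rightarrow> bit" and c :: nat
  assumes c: "c \<ge> 1" and p: "p < c"
  defines "y \<equiv> monom (1::bit) c"
  defines "B \<equiv> \<lambda>j. \<Sum>p<c. monom (dd (j*c+p)) p"
  defines "R \<equiv> (B 0 + B 5 + B 7 + B 8) + (B 1 + B 5 + B 6 + B 7 + B 9) * y + (B 2 + B 5 + B 6) * y^2
     + (B 3 + B 5 + B 6 + B 8) * y^3 + (B 4 + B 6 + B 7 + B 9) * y^4"
  shows "coeff R p = dd p + dd (5*c+p) + dd (7*c+p) + dd (8*c+p)"
    "coeff R (c+p) = dd (c+p) + dd (5*c+p) + dd (6*c+p) + dd (7*c+p) + dd (9*c+p)"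
    "coeff R (2*c+p) = dd (2*c+p) + dd (5*c+p) + dd (6*c+p)"
    "coeff R (3*c+p) = dd (3*c+p) + dd (5*c+p) + dd (6*c+p) + dd (8*c+p)"
    "coeff R (4*c+p) = dd (4*c+p) + dd (6*c+p) + dd (7*c+p) + dd (9*c+p)"
proof -
  have Bc: "coeff (B j) p = dd (j*c+p)" for j
    unfolding B_def using p by (simp add: coeff_blk)
  have Bc': "coeff (B j) k = 0" if "k \<ge> c" for j k
    unfolding B_def using that by (simp add: coeff_blk)
  have cR: "coeff R n = (if n < c then coeff (B 0 + B 5 + B 7 + B 8) n else if n < 2*c then coeff (B 1 + B 5 + B 6 + B 7 + B 9) (n - c)
     else if n < 3*c then coeff (B 2 + B 5 + B 6) (n - 2*c) else if n < 4*c then coeff (B 3 + B 5 + B 6 + B 8) (n - 3*c)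
     else if n < 5*c then coeff (B 4 + B 6 + B 7 + B 9) (n - 4*c) else 0)" for n
    unfolding R_def y_def by (rule coeff5) (simp_all add: Bc' del: add_bit_eq_xor)
  show "coeff R p = dd p + dd (5*c+p) + dd (7*c+p) + dd (8*c+p)"
    using p by (simp add: cR Bc del: add_bit_eq_xor)
  show "coeff R (c+p) = dd (c+p) + dd (5*c+p) + dd (6*c+p) + dd (7*c+p) + dd (9*c+p)"
    using p Bc[of 1] by (simp add: cR Bc del: add_bit_eq_xor)
  show "coeff R (2*c+p) = dd (2*c+p) + dd (5*c+p) + dd (6*c+p)"
    using p by (simp add: cR Bc del: add_bit_eq_xor)
  show "coeff R (3*c+p) = dd (3*c+p) + dd (5*c+p) + dd (6*c+p) + dd (8*c+p)"
    using p by (simp add: cR Bc del: add_bit_eq_xor)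
  show "coeff R (4*c+p) = dd (4*c+p) + dd (6*c+p) + dd (7*c+p) + dd (9*c+p)"
    using p by (simp add: cR Bc del: add_bit_eq_xor)
qed

definition outw :: "nat \<Rightarrow> nat \<Rightarrow> nat \<Rightarrow> nat" where
  "outw c q p = (10*c-1) + 12*p + (if p < c - 1 then [11,6,1,3,8] ! q else [10,5,1,3,7] ! q)"

lemma coeff_final:
  fixes d :: "nat \<Rightarrow> bit" and c :: nat
  assumes c: "c \<ge> 1" and q: "q < 5" and p: "p < c"
  defines "dd \<equiv> \<lambda>k. if k < 10*c-1 then d k else 0"
  defines "y \<equiv> monom (1::bit) c"
  defines "B \<equiv> \<lambda>j. \<Sum>p<c. monom (dd (j*c+p)) p"
  defines "R \<equiv> (B 0 + B 5 + B 7 + B 8) + (B 1 + B 5 + B 6 + B 7 + B 9) * y + (B 2 + B 5 + B 6) * y^2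
     + (B 3 + B 5 + B 6 + B 8) * y^3 + (B 4 + B 6 + B 7 + B 9) * y^4"
  shows "wire_val (10*c-1) d (gate_vals (10*c-1) d (prog c)) (outw c q p) = coeff R (q*c+p)"
proof -
  have CR: "coeff R p = dd p + dd (5*c+p) + dd (7*c+p) + dd (8*c+p)"
    "coeff R (c+p) = dd (c+p) + dd (5*c+p) + dd (6*c+p) + dd (7*c+p) + dd (9*c+p)"
    "coeff R (2*c+p) = dd (2*c+p) + dd (5*c+p) + dd (6*c+p)"
    "coeff R (3*c+p) = dd (3*c+p) + dd (5*c+p) + dd (6*c+p) + dd (8*c+p)"
    "coeff R (4*c+p) = dd (4*c+p) + dd (6*c+p) + dd (7*c+p) + dd (9*c+p)"
    unfolding R_def B_def y_def by (rule coeffR[OF c p])+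
  let ?V = "wire_val (10*c-1) d (gate_vals (10*c-1) d (prog c))"
  have qs: "q = 0 \<or> q = 1 \<or> q = 2 \<or> q = 3 \<or> q = 4" using q by presburger
  show ?thesis
  proof (cases "p < c - 1")
    case True
    note S = sem1[OF c refl True, of d]
    have dd: "dd (j*c+p) = d (j*c+p)" if "j \<le> 9" for j
    proof -
      have "j*c \<le> 9*c" using that by (simp add: mult_le_mono1)
      then have "j*c+p < 10*c-1" using True c by linarith
      then show ?thesis unfolding dd_def by simp
    qed
    have D: "dd p = d p" "dd (c+p) = d (c+p)" "dd (2*c+p) = d (2*c+p)" "dd (3*c+p) = d (3*c+p)"
      "dd (4*c+p) = d (4*c+p)" "dd (5*c+p) = d (5*c+p)" "dd (6*c+p) = d (6*c+p)" "dd (7*c+p) = d (7*c+p)"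
      "dd (8*c+p) = d (8*c+p)" "dd (9*c+p) = d (9*c+p)"
      using dd[of 0] dd[of 1] dd[of 2] dd[of 3] dd[of 4] dd[of 5] dd[of 6] dd[of 7] dd[of 8] dd[of 9] by simp_all
    have o: "outw c q p = (10*c-1) + 12*p + [11,6,1,3,8] ! q" unfolding outw_def using True by simp
    from qs show ?thesis
    proof (elim disjE)
      assume "q = 0" then show ?thesis using S(1) CR(1) D o by (simp add: ac_simps del: add_bit_eq_xor)
    next
      assume "q = 1" then show ?thesis using S(2) CR(2) D o by (simp add: ac_simps del: add_bit_eq_xor)
    next
      assume "q = 2" then show ?thesis using S(3) CR(3) D o by (simp add: ac_simps del: add_bit_eq_xor)
    next
      assume "q = 3" then show ?thesis using S(4) CR(4) D o by (simp add: ac_simps del: add_bit_eq_xor)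
    next
      assume "q = 4" then show ?thesis using S(5) CR(5) D o by (simp add: ac_simps del: add_bit_eq_xor)
    qed
  next
    case False
    then have pc: "p = c - 1" using p by simp
    note S = sem2[OF c refl pc, of d]
    have dd: "dd (j*c+p) = d (j*c+p)" if "j \<le> 8" for j
    proof -
      have "j*c \<le> 8*c" using that by (simp add: mult_le_mono1)
      then have "j*c+p < 10*c-1" using pc c by linarith
      then show ?thesis unfolding dd_def by simp
    qed
    have D: "dd p = d p" "dd (c+p) = d (c+p)" "dd (2*c+p) = d (2*c+p)" "dd (3*c+p) = d (3*c+p)"
      "dd (4*c+p) = d (4*c+p)" "dd (5*c+p) = d (5*c+p)" "dd (6*c+p) = d (6*c+p)" "dd (7*c+p) = d (7*c+p)"
      "dd (8*c+p) = d (8*c+p)" "dd (9*c+p) = 0"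
      using dd[of 0] dd[of 1] dd[of 2] dd[of 3] dd[of 4] dd[of 5] dd[of 6] dd[of 7] dd[of 8] pc c
      by (simp_all add: dd_def)
    have o: "outw c q p = (10*c-1) + 12*p + [10,5,1,3,7] ! q" unfolding outw_def using False by simp
    from qs show ?thesis
    proof (elim disjE)
      assume "q = 0" then show ?thesis using S(1) CR(1) D o by (simp add: ac_simps del: add_bit_eq_xor)
    next
      assume "q = 1" then show ?thesis using S(2) CR(2) D o by (simp add: ac_simps del: add_bit_eq_xor)
    next
      assume "q = 2" then show ?thesis using S(3) CR(3) D o by (simp add: ac_simps del: add_bit_eq_xor)
    next
      assume "q = 3" then show ?thesis using S(4) CR(4) D o by (simp add: ac_simps del: add_bit_eq_xor)
    next
      assume "q = 4" then show ?thesis using S(5) CR(5) D o by (simp add: ac_simps del: add_bit_eq_xor)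
    qed
  qed
qed

lemma outw_bound:
  assumes "c \<ge> 1" "q < 5" "p < c"
  shows "outw c q p < (10*c-1) + (12*c-1)"
proof -
  have "q \<in> {0,1,2,3,4}" using assms(2) by (simp only: insert_iff empty_iff) presburger
  then show ?thesis using assms unfolding outw_def by (cases "p < c - 1") auto
qed

theorem mainTheorem3:
  fixes c :: nat
  assumes "c \<ge> 1"
  defines "m \<equiv> 5 * c"
  defines "f \<equiv> (monom 1 (5*c) + monom 1 (3*c) + monom 1 (2*c) + monom 1 c + 1 :: bit poly)"
  shows "\<exists>gs outs. valid_slp (2*m - 1) gs outs \<and> length gs = 12 * c - 1 \<and> length outs = m \<and>
           (\<forall>d :: nat \<Rightarrow> bit. \<forall>i < m.
              slp_outputs (2*m - 1) gs outs d ! i = coeff ((\<Sum>k < 2*m - 1. monom (d k) k) mod f) i)"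
proof -
  have c: "c \<ge> 1" by fact
  have nm: "2*m - 1 = 10*c - 1" unfolding m_def by simp
  define outs where "outs = map (\<lambda>i. outw c (i div c) (i mod c)) [0..<5*c]"
  have valid: "valid_slp (10*c-1) (prog c) outs"
    unfolding valid_slp_def
  proof
    show "\<forall>j<length (prog c). fst (prog c ! j) < 10 * c - 1 + j \<and> snd (prog c ! j) < 10 * c - 1 + j"
      by (rule prog_valid[OF c])
    show "\<forall>w\<in>set outs. w < 10 * c - 1 + length (prog c)"
    proof
      fix w assume "w \<in> set outs"
      then obtain i where i: "i < 5*c" "w = outw c (i div c) (i mod c)" unfolding outs_def by auto
      have "i div c < 5" using i(1) c by (simp add: div_less_iff_less_mult mult.commute)
      moreover have "i mod c < c" using c by simp
      ultimately show "w < 10 * c - 1 + length (prog c)"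
        using outw_bound[OF c] i(2) length_prog[OF c] by simp
    qed
  qed
  have vals: "slp_outputs (10*c-1) (prog c) outs d ! i = coeff ((\<Sum>k < 10*c - 1. monom (d k) k) mod f) i"
    if i: "i < 5*c" for d :: "nat \<Rightarrow> bit" and i
  proof -
    define dd where "dd = (\<lambda>k. if k < 10*c-1 then d k else 0)"
    have D: "(\<Sum>k < 10*c - 1. monom (d k) k) = (\<Sum>k < 10*c. monom (dd k) k)"
    proof -
      obtain N where N: "N = 10*c-1" by simp
      have e: "10*c = Suc N" using c N by simp
      have "(\<Sum>k < Suc N. monom (dd k) k) = (\<Sum>k < N. monom (dd k) k)"
        by (simp add: dd_def N)
      also have "\<dots> = (\<Sum>k < N. monom (d k) k)"
        by (rule sum.cong) (simp_all add: dd_def N)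
      finally show ?thesis by (simp only: e N[symmetric] diff_Suc_1)
    qed
    have q: "i div c < 5" using i c by (simp add: div_less_iff_less_mult mult.commute)
    have p: "i mod c < c" using c by simp
    have ie: "i = (i div c) * c + i mod c" by simp
    have "slp_outputs (10*c-1) (prog c) outs d ! i = wire_val (10*c-1) d (gate_vals (10*c-1) d (prog c)) (outw c (i div c) (i mod c))"
      unfolding slp_outputs_def outs_def using i by simp
    also have "\<dots> = coeff ((\<Sum>k < 10*c. monom (dd k) k) mod f) ((i div c) * c + i mod c)"
      unfolding coeff_final[OF c q p] f_def reduce[OF c] dd_def ..
    also have "\<dots> = coeff ((\<Sum>k < 10*c - 1. monom (d k) k) mod f) i"
      using ie D by simp
    finally show ?thesis .
  qed
  show ?thesis unfolding nm
    by (rule exI[of _ "prog c"], rule exI[of _ outs])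
       (use valid length_prog[OF c] vals in \<open>simp add: outs_def m_def\<close>)
qed

end
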